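(* Let $X_1,X_2,\dots$ be nonnegative random variables (task durations), $S_1,S_2,\dots$ i.i.d. exponential random variables with parameter $\lambda>0$, and $a_1,a_2,\dots\in\{0,1\}$ arbitrary decisions. Let $T>0$, $\theta=\min\{n\in\mathbb N:\sum_{i=1}^n(S_i+X_ia_i)>T\}$ and $S=2\lambda T+1$. Then $$\mathbb E\big[(\theta-S)_+\big]\le4.$$
   Context: $(z)_+=\max\{z,0\}$. *)

theory Defs
  imports "HOL-Probability.Probability"
begin

definition stop_time :: "real \<Rightarrow> (nat \<Rightarrow> 'a \<Rightarrow> real) \<Rightarrow> (nat \<Rightarrow> 'a \<Rightarrow> real)
    \<Rightarrow> (nat \<Rightarrow> 'a \<Rightarrow> real) \<Rightarrow> 'a \<Rightarrow> nat" where
  "stop_time T S X a \<omega> = (LEAST n. (\<Sum>i=1..n. S i \<omega> + X i \<omega> * a i \<omega>) > T)"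

end

theory Submission
  imports Defs
begin

lemma ln2_half: "ln (2::real) \<ge> 1/2"
proof -
  have h: "exp (1/2::real) * exp (1/2) = exp 1" by (simp flip: exp_add)
  have "exp (1/2::real) \<le> 2"
  proof (rule ccontr)
    assume "\<not> exp (1/2::real) \<le> 2"
    hence g: "2 < exp (1/2::real)" by simp
    have "2 * 2 < exp (1/2::real) * exp (1/2)"
      by (rule mult_strict_mono[OF g g]) simp_all
    thus False using h exp_le by simp
  qed
  hence "ln (exp (1/2::real)) \<le> ln 2" by (subst ln_le_cancel_iff) simp_all
  thus ?thesis by simp
qed

lemma half_pow: "(1/2::real)^N = exp (- ln 2 * real N)"
proof -
  have e: "exp (- ln 2) = (1/2::real)" by (simp add: exp_minus)
  have "exp (- ln 2 * real N) = exp (real N * (- ln 2))" by (simp add: mult.commute)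
  also have "\<dots> = exp (- ln 2) ^ N" by (rule exp_of_nat_mult)
  finally show ?thesis using e by simp
qed

lemma exp_mgf:
  assumes D: "distributed M lborel Y (exponential_density l)" and l: "l > 0"
  shows "(\<integral>\<^sup>+\<omega>. ennreal (exp (- l * Y \<omega>)) \<partial>M) = ennreal (1/2)"
proof -
  have "(\<integral>\<^sup>+\<omega>. ennreal (exp (- l * Y \<omega>)) \<partial>M)
      = (\<integral>\<^sup>+x. ennreal (exponential_density l x) * ennreal (exp (- l * x)) \<partial>lborel)"
    by (rule distributed_nn_integral[OF D, symmetric]) simp
  also have "\<dots> = (\<integral>\<^sup>+x. ennreal (1/2) * ennreal (exponential_density (2*l) x) \<partial>lborel)"
  proof (intro nn_integral_cong)
    fix x :: real
    have "exponential_density l x * exp (- l * x) = (1/2) * exponential_density (2*l) x"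
      by (simp add: erlang_density_def exp_add[symmetric] algebra_simps)
    hence eq: "exponential_density l x * exp (- l * x) = (1/2) * exponential_density (2*l) x" .
    have "ennreal (exponential_density l x) * ennreal (exp (- l * x)) = ennreal (exponential_density l x * exp (- l * x))"
      by (rule ennreal_mult[symmetric]) (simp_all add: exponential_density_nonneg l)
    also have "\<dots> = ennreal ((1/2) * exponential_density (2*l) x)"
      by (simp only: eq)
    also have "\<dots> = ennreal (1/2) * ennreal (exponential_density (2*l) x)"
      by (rule ennreal_mult) (simp_all add: exponential_density_nonneg l)
    finally show "ennreal (exponential_density l x) * ennreal (exp (- l * x)) = ennreal (1/2) * ennreal (exponential_density (2*l) x)" .
  qed
  also have "\<dots> = ennreal (1/2) * (\<integral>\<^sup>+x. ennreal (exponential_density (2*l) x) \<partial>lborel)"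
    by (rule nn_integral_cmult) simp
  also have "(\<integral>\<^sup>+x. ennreal (exponential_density (2*l) x) \<partial>lborel) = 1"
  proof -
    interpret P: prob_space "density lborel (exponential_density (2*l))"
      using prob_space_exponential_density[of "2*l"] l by simp
    have "emeasure (density lborel (exponential_density (2*l))) UNIV = 1"
      using P.emeasure_space_1 by simp
    thus ?thesis by (simp add: emeasure_density)
  qed
  finally show ?thesis by simp
qed

lemma main_bound:
  fixes M :: "'a measure" and S X a :: "nat \<Rightarrow> 'a \<Rightarrow> real" and l T :: real
  assumes "prob_space M"
    and l: "l > 0" and T: "T > 0"
    and "\<And>i. X i \<in> borel_measurable M" and Xnn: "\<And>i \<omega>. \<omega> \<in> space M \<Longrightarrow> X i \<omega> \<ge> 0"
    and "\<And>i. a i \<in> borel_measurable M" and a01: "\<And>i \<omega>. \<omega> \<in> space M \<Longrightarrow> a i \<omega> \<in> {0, 1}"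
    and ind: "prob_space.indep_vars M (\<lambda>_. borel) S UNIV"
    and D: "\<And>i. distributed M lborel (S i) (exponential_density l)"
  shows "(\<integral>\<^sup>+ \<omega>. ennreal (max (real (stop_time T S X a \<omega>) - (2 * l * T + 1)) 0) \<partial>M) \<le> 4"
proof -
  interpret prob_space M by fact
  have Sm[measurable]: "S i \<in> borel_measurable M" for i
    using distributed_measurable[OF D[of i]] by simp
  define c where "c = 2 * l * T + 1"
  define n where "n k = nat \<lfloor>c + real k\<rfloor>" for k :: nat
  define A where "A k = {\<omega>\<in>space M. (\<Sum>i=1..n k. S i \<omega>) \<le> T}" for k
  have cpos: "c \<ge> 0" unfolding c_def using l T by simp
  have nk_le: "real (n k) \<le> c + real k" for k
  proof -
    have "0 \<le> \<lfloor>c + real k\<rfloor>" using cpos by simp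
    hence "real (n k) = of_int \<lfloor>c + real k\<rfloor>" unfolding n_def by simp
    thus ?thesis by linarith
  qed
  have Am[measurable]: "A k \<in> sets M" for k unfolding A_def by measurable
  have step1: "ennreal (max (real (stop_time T S X a \<omega>) - c) 0) \<le> (\<Sum>k. indicator (A k) \<omega>)"
    if \<omega>: "\<omega> \<in> space M" for \<omega>
  proof (cases "real (stop_time T S X a \<omega>) - c \<le> 0")
    case True thus ?thesis by simp
  next
    case False
    define x where "x = real (stop_time T S X a \<omega>) - c"
    define m where "m = nat \<lceil>x\<rceil>"
    have "ennreal (max (real (stop_time T S X a \<omega>) - c) 0) = ennreal x"
      using False by (simp add: x_def)
    also have "\<dots> \<le> ennreal (real m)"
      unfolding m_def using False x_def by (intro ennreal_leI) linarith
    also have "\<dots> = (\<Sum>k<m. (1::ennreal))"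
      by (simp add: ennreal_of_nat_eq_real_of_nat)
    also have "\<dots> \<le> (\<Sum>k<m. indicator (A k) \<omega>)"
    proof (intro sum_mono)
      fix k assume "k \<in> {..<m}"
      hence "int k < \<lceil>x\<rceil>" unfolding m_def by simp
      hence "real k < x" by (simp add: less_ceiling_iff)
      hence "n k < stop_time T S X a \<omega>"
        using nk_le[of k] unfolding x_def by linarith
      hence "\<not> (\<Sum>i=1..n k. S i \<omega> + X i \<omega> * a i \<omega>) > T"
        unfolding stop_time_def by (rule not_less_Least)
      moreover have "(\<Sum>i=1..n k. S i \<omega>) \<le> (\<Sum>i=1..n k. S i \<omega> + X i \<omega> * a i \<omega>)"
      proof (intro sum_mono)
        fix i
        have "0 \<le> X i \<omega> * a i \<omega>" using Xnn[OF \<omega>, of i] a01[OF \<omega>, of i] by auto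
        thus "S i \<omega> \<le> S i \<omega> + X i \<omega> * a i \<omega>" by simp
      qed
      ultimately have "\<omega> \<in> A k" unfolding A_def using \<omega> by simp
      thus "(1::ennreal) \<le> indicator (A k) \<omega>" by simp
    qed
    also have "\<dots> \<le> (\<Sum>k. indicator (A k) \<omega>)"
      by (rule sum_le_suminf) auto
    finally show ?thesis .
  qed
  have step3: "emeasure M (A k) \<le> ennreal ((1/2)^k)" for k
  proof -
    have "emeasure M (A k) = (\<integral>\<^sup>+\<omega>. indicator (A k) \<omega> \<partial>M)" by simp
    also have "\<dots> \<le> (\<integral>\<^sup>+\<omega>. ennreal (exp (l*T)) * (\<Prod>i\<in>{1..n k}. ennreal (exp (- l * S i \<omega>))) \<partial>M)"
    proof (intro nn_integral_mono)
      fix \<omega> assume "\<omega> \<in> space M"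
      have "(\<Prod>i\<in>{1..n k}. ennreal (exp (- l * S i \<omega>))) = ennreal (\<Prod>i\<in>{1..n k}. exp (- l * S i \<omega>))"
        by (rule prod_ennreal) simp
      also have "(\<Prod>i\<in>{1..n k}. exp (- l * S i \<omega>)) = exp (\<Sum>i\<in>{1..n k}. - l * S i \<omega>)"
        by (simp add: exp_sum)
      also have "(\<Sum>i\<in>{1..n k}. - l * S i \<omega>) = - l * (\<Sum>i\<in>{1..n k}. S i \<omega>)"
        by (simp add: sum_distrib_left)
      finally have eq: "(\<Prod>i\<in>{1..n k}. ennreal (exp (- l * S i \<omega>))) = ennreal (exp (- l * (\<Sum>i\<in>{1..n k}. S i \<omega>)))" .
      show "indicator (A k) \<omega> \<le> ennreal (exp (l*T)) * (\<Prod>i\<in>{1..n k}. ennreal (exp (- l * S i \<omega>)))"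
      proof (cases "\<omega> \<in> A k")
        case True
        hence "(\<Sum>i\<in>{1..n k}. S i \<omega>) \<le> T" unfolding A_def by simp
        hence h: "1 \<le> exp (l*T) * exp (- l * (\<Sum>i\<in>{1..n k}. S i \<omega>))"
          using l by (simp add: exp_add[symmetric] mult_left_mono)
        have "indicator (A k) \<omega> = (1::ennreal)" using True by simp
        also have "\<dots> \<le> ennreal (exp (l*T) * exp (- l * (\<Sum>i\<in>{1..n k}. S i \<omega>)))"
          using ennreal_leI[OF h] by simp
        also have "\<dots> = ennreal (exp (l*T)) * (\<Prod>i\<in>{1..n k}. ennreal (exp (- l * S i \<omega>)))"
          unfolding eq by (simp add: ennreal_mult)
        finally show ?thesis .
      qed simp
    qed
    also have "\<dots> = ennreal (exp (l*T)) * (\<integral>\<^sup>+\<omega>. (\<Prod>i\<in>{1..n k}. ennreal (exp (- l * S i \<omega>))) \<partial>M)"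
      by (rule nn_integral_cmult) measurable
    also have "(\<integral>\<^sup>+\<omega>. (\<Prod>i\<in>{1..n k}. ennreal (exp (- l * S i \<omega>))) \<partial>M)
        = (\<Prod>i\<in>{1..n k}. \<integral>\<^sup>+\<omega>. ennreal (exp (- l * S i \<omega>)) \<partial>M)"
    proof (rule indep_vars_nn_integral)
      show "indep_vars (\<lambda>_. borel) (\<lambda>i \<omega>. ennreal (exp (- l * S i \<omega>))) {1..n k}"
        by (rule indep_vars_compose2[where M'="\<lambda>_. borel"], rule indep_vars_subset[OF ind]) auto
    qed auto
    also have "\<dots> = ennreal (1/2) ^ (n k)"
      using exp_mgf[OF D l] by simp
    also have "\<dots> = ennreal ((1/2)^(n k))"
      by (rule ennreal_power) simp
    also have "ennreal (exp (l*T)) * ennreal ((1/2)^(n k)) = ennreal (exp (l*T) * (1/2)^(n k))"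
      by (simp add: ennreal_mult)
    also have "exp (l*T) * (1/2)^(n k) \<le> (1/2)^k"
    proof -
      have nk: "real (n k) \<ge> 2*l*T + real k"
        unfolding n_def c_def using l T by linarith
      have "(1/2::real)^(n k) = exp (- ln 2 * real (n k))"
        by (rule half_pow)
      also have "\<dots> \<le> exp (- ln 2 * (2*l*T + real k))"
        using nk by (simp add: mult_left_mono)
      finally have "exp (l*T) * (1/2)^(n k) \<le> exp (l*T) * exp (- ln 2 * (2*l*T + real k))" by simp
      also have "\<dots> = exp (l*T*(1 - 2 * ln 2)) * exp (- ln 2 * real k)"
        by (simp add: exp_add[symmetric] algebra_simps)
      also have "\<dots> \<le> 1 * exp (- ln 2 * real k)"
        using ln2_half l T by (intro mult_right_mono) (auto simp: mult_nonpos_nonneg mult_nonneg_nonpos)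
      also have "exp (- ln 2 * real k) = (1/2)^k"
        by (rule half_pow[symmetric])
      finally show ?thesis by simp
    qed
    finally show ?thesis by (simp add: ennreal_leI)
  qed
  have "(\<integral>\<^sup>+ \<omega>. ennreal (max (real (stop_time T S X a \<omega>) - c) 0) \<partial>M)
      \<le> (\<integral>\<^sup>+ \<omega>. (\<Sum>k. indicator (A k) \<omega>) \<partial>M)"
    using step1 by (intro nn_integral_mono) auto
  also have "\<dots> = (\<Sum>k. emeasure M (A k))"
    by (subst nn_integral_suminf) auto
  also have "\<dots> \<le> (\<Sum>k. ennreal ((1/2)^k))"
    using step3 by (intro suminf_le) auto
  also have "\<dots> = ennreal (\<Sum>k. (1/2::real)^k)"
    by (rule suminf_ennreal2) auto
  also have "\<dots> = 2" by (simp add: suminf_geometric)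
  also have "(2::ennreal) \<le> 4" by simp
  finally show ?thesis unfolding c_def .
qed

theorem lemmaF4:
  fixes M :: "'a measure" and S X a :: "nat \<Rightarrow> 'a \<Rightarrow> real" and l T :: real
  assumes "prob_space M"
    and "l > 0" and "T > 0"
    and "\<And>i. X i \<in> borel_measurable M" and "\<And>i \<omega>. \<omega> \<in> space M \<Longrightarrow> X i \<omega> \<ge> 0"
    and "\<And>i. a i \<in> borel_measurable M" and "\<And>i \<omega>. \<omega> \<in> space M \<Longrightarrow> a i \<omega> \<in> {0, 1}"
    and "prob_space.indep_vars M (\<lambda>_. borel) S UNIV"
    and "\<And>i. distributed M lborel (S i) (exponential_density l)"
  shows "(\<integral>\<^sup>+ \<omega>. ennreal (max (real (stop_time T S X a \<omega>) - (2 * l * T + 1)) 0) \<partial>M) \<le> 4"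
  by (rule main_bound[OF assms])

end
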